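(* For every infinite binary word $\mathbf{x}$ the following equivalences hold: $\mathbf{x}\in A\iff\mu(\mathbf{x})\in A$; $\mathbf{x}\in B\iff 0\mu(\mathbf{x})\in A$; $\mathbf{x}\in C\iff 00\mu(\mathbf{x})\in A$; $\mathbf{x}\in D\iff 1\mu(\mathbf{x})\in A$; $\mathbf{x}\in E\iff 11\mu(\mathbf{x})\in A$; $\mathbf{x}\in D\iff \mu(\mathbf{x})\in B$; $\mathbf{x}\in B\iff 0\mu(\mathbf{x})\in B$; $\mathbf{x}\in E\iff 1\mu(\mathbf{x})\in B$; $\mathbf{x}\in B\iff \mu(\mathbf{x})\in D$; $\mathbf{x}\in D\iff 1\mu(\mathbf{x})\in D$; $\mathbf{x}\in C\iff 0\mu(\mathbf{x})\in D$; $\mathbf{x}\in I\iff \mu(\mathbf{x})\in E$; $\mathbf{x}\in C\iff 0\mu(\mathbf{x})\in E$; $\mathbf{x}\in F\iff \mu(\mathbf{x})\in C$; $\mathbf{x}\in E\iff 1\mu(\mathbf{x})\in C$; $\mathbf{x}\in J\iff 0\mu(\mathbf{x})\in I$; $\mathbf{x}\in G\iff 1\mu(\mathbf{x})\in F$; $\mathbf{x}\in K\iff \mu(\mathbf{x})\in J$; $\mathbf{x}\in J\iff \mu(\mathbf{x})\in K$; $\mathbf{x}\in B\iff 0\mu(\mathbf{x})\in J$; $\mathbf{x}\in C\iff 0\mu(\mathbf{x})\in K$; $\mathbf{x}\in H\iff \mu(\mathbf{x})\in G$; $\mathbf{x}\in G\iff \mu(\mathbf{x})\in H$; $\mathbf{x}\in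 D\iff 1\mu(\mathbf{x})\in G$; $\mathbf{x}\in E\iff 1\mu(\mathbf{x})\in H$.
   Context: $\Sigma=\{0,1\}$. An overlap is a word $axaxa$ with $a\in\Sigma$, $x\in\Sigma^*$; a word is overlap-free if it has no overlap as a factor. $\mathcal{O}$ is the set of right-infinite binary overlap-free words, and $\mu$ is the morphism $0\mapsto01$, $1\mapsto10$. Define the following subsets of $\Sigma^\omega$: $A=\mathcal{O}$; $B=\{\mathbf{x}: 1\mathbf{x}\in\mathcal{O}\}$; $C=\{\mathbf{x}: 1\mathbf{x}\in\mathcal{O}$ and $\mathbf{x}$ begins with $101\}$; $D=\{\mathbf{x}: 0\mathbf{x}\in\mathcal{O}\}$; $E=\{\mathbf{x}: 0\mathbf{x}\in\mathcal{O}$ and $\mathbf{x}$ begins with $010\}$; $F=\{\mathbf{x}: 0\mathbf{x}\in\mathcal{O}$ and $\mathbf{x}$ begins with $11\}$; $G=\{\mathbf{x}: 0\mathbf{x}\in\mathcal{O}$ and $\mathbf{x}$ begins with $1\}$; $H=\{\mathbf{x}: 1\mathbf{x}\in\mathcal{O}$ and $\mathbf{x}$ begins with $1\}$; $I=\{\mathbf{x}: 1\mathbf{x}\in\mathcal{O}$ and $\mathbf{x}$ begins with $00\}$; $J=\{\mathbf{x}: 1\mathbf{x}\in\mathcal{O}$ and $\mathbf{x}$ begins with $0\}$; $K=\{\mathbf{x}: 0\mathbf{x}\in\mathcal{O}$ and $\mathbf{x}$ begins with $0\}$. *)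

theory Defs
  imports Main
begin

(* Binary alphabet Sigma = {0,1} encoded as bool: False = 0, True = 1.
   Right-infinite words are functions nat => bool. *)
type_synonym iword = "nat \<Rightarrow> bool"

definition factor :: "bool list \<Rightarrow> iword \<Rightarrow> bool" where
  "factor w x \<longleftrightarrow> (\<exists>i. \<forall>j<length w. x (i + j) = w ! j)"

definition overlap :: "bool list \<Rightarrow> bool" where
  "overlap w \<longleftrightarrow> (\<exists>a u. w = [a] @ u @ [a] @ u @ [a])"

definition overlap_free :: "iword \<Rightarrow> bool" where
  "overlap_free x \<longleftrightarrow> (\<forall>w. factor w x \<longrightarrow> \<not> overlap w)"

definition OF :: "iword set" where
  "OF = {x. overlap_free x}"

definition pre :: "bool \<Rightarrow> iword \<Rightarrow> iword" where
  "pre a x = (\<lambda>n. if n = 0 then a else x (n - 1))"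

(* Thue-Morse morphism mu: 0 -> 01, 1 -> 10, applied to an infinite word *)
definition mu :: "iword \<Rightarrow> iword" where
  "mu x = (\<lambda>n. if even n then x (n div 2) else \<not> x (n div 2))"

definition begins :: "bool list \<Rightarrow> iword \<Rightarrow> bool" where
  "begins w x \<longleftrightarrow> (\<forall>j<length w. x j = w ! j)"

abbreviation L0 :: bool where "L0 \<equiv> False"
abbreviation L1 :: bool where "L1 \<equiv> True"

definition SA :: "iword set" where "SA = OF"
definition SB :: "iword set" where "SB = {x. pre L1 x \<in> OF}"
definition SC :: "iword set" where "SC = {x. pre L1 x \<in> OF \<and> begins [L1,L0,L1] x}"
definition SD :: "iword set" where "SD = {x. pre L0 x \<in> OF}"
definition SE :: "iword set" where "SE = {x. pre L0 x \<in> OF \<and> begins [L0,L1,L0] x}"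
definition SF :: "iword set" where "SF = {x. pre L0 x \<in> OF \<and> begins [L1,L1] x}"
definition SG :: "iword set" where "SG = {x. pre L0 x \<in> OF \<and> begins [L1] x}"
definition SH :: "iword set" where "SH = {x. pre L1 x \<in> OF \<and> begins [L1] x}"
definition SI :: "iword set" where "SI = {x. pre L1 x \<in> OF \<and> begins [L0,L0] x}"
definition SJ :: "iword set" where "SJ = {x. pre L1 x \<in> OF \<and> begins [L0] x}"
definition SK :: "iword set" where "SK = {x. pre L0 x \<in> OF \<and> begins [L0] x}"

end

theory Submission
  imports Defs
begin


definition ovs :: "iword \<Rightarrow> nat \<Rightarrow> nat \<Rightarrow> bool" where
  "ovs z i p \<longleftrightarrow> p \<ge> 1 \<and> (\<forall>k\<le>p. z (i+k) = z (i+k+p))"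

definition blk :: "iword \<Rightarrow> bool" where
  "blk z \<longleftrightarrow> (\<forall>n. even n \<longrightarrow> z (Suc n) = (\<not> z n))"

lemma pre_0[simp]: "pre a y 0 = a" by (simp add: pre_def)
lemma pre_Suc[simp]: "pre a y (Suc n) = y n" by (simp add: pre_def)
lemma mu_even[simp]: "mu x (2*n) = x n" by (simp add: mu_def)
lemma mu_odd[simp]: "mu x (Suc (2*n)) = (\<not> x n)" by (simp add: mu_def)

lemma blk_mu: "blk (mu x)"
  unfolding blk_def by (auto simp: mu_def)

lemma overlap_iff: "overlap w \<longleftrightarrow> (\<exists>p\<ge>1. length w = 2*p+1 \<and> (\<forall>j\<le>p. w!j = w!(j+p)))"
proof
  assume "overlap w"
  then obtain a u where w: "w = (a#u) @ (a#u) @ [a]" unfolding overlap_def by auto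
  show "\<exists>p\<ge>1. length w = 2*p+1 \<and> (\<forall>j\<le>p. w!j = w!(j+p))"
  proof (intro exI conjI allI impI)
    show "1 \<le> Suc (length u)" by simp
    show "length w = 2 * Suc (length u) + 1" using w by simp
    fix j assume j: "j \<le> Suc (length u)"
    show "w ! j = w ! (j + Suc (length u))"
    proof (cases "j = Suc (length u)")
      case True then show ?thesis using w by (simp add: nth_append)
    next
      case False then have jl: "j < length (a#u)" using j by simp
      have w2: "w = (a#u) @ ((a#u) @ [a])" using w by simp
      have "w ! j = (a#u) ! j" unfolding w2 by (rule nth_append_left) (rule jl)
      moreover have "w ! (j + Suc (length u)) = ((a#u) @ [a]) ! j"
        unfolding w2 using nth_append_length_plus[of "a#u" "(a#u)@[a]" j] by (simp add: add.commute)
      moreover have "((a#u) @ [a]) ! j = (a#u) ! j" by (rule nth_append_left) (rule jl)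
      ultimately show ?thesis by simp
    qed
  qed
next
  assume "\<exists>p\<ge>1. length w = 2*p+1 \<and> (\<forall>j\<le>p. w!j = w!(j+p))"
  then obtain p where p: "p \<ge> 1" "length w = 2*p+1" and h: "\<forall>j\<le>p. w!j = w!(j+p)" by blast
  have lt: "length (take p w) = p" using p by simp
  have w: "w = take p w @ take p w @ [w!0]"
  proof (rule nth_equalityI)
    show "length w = length (take p w @ take p w @ [w!0])" using p by simp
    fix j assume "j < length w"
    then have j: "j < 2*p+1" using p by simp
    consider "j < p" | "p \<le> j" "j < 2*p" | "j = 2*p" using j by linarith
    then show "w ! j = (take p w @ take p w @ [w!0]) ! j"
    proof cases
      case 1 then show ?thesis using lt by (simp add: nth_append)
    next
      case 2
      have "w ! j = w ! (j - p)" using h[rule_format, of "j-p"] 2 by simp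
      then show ?thesis using 2 lt by (simp add: nth_append)
    next
      case 3
      have "w ! j = w ! 0" using h[rule_format, of 0] h[rule_format, of p] 3 by (simp add: mult_2)
      then show ?thesis using 3 lt by (simp add: nth_append)
    qed
  qed
  have "take p w \<noteq> []" using lt p by auto
  then have "take p w = hd (take p w) # tl (take p w)" by (metis list.collapse)
  moreover have "hd (take p w) = w!0" using p by (cases w) auto
  ultimately have "take p w = w!0 # tl (take p w)" by simp
  then have "w = [w!0] @ tl (take p w) @ [w!0] @ tl (take p w) @ [w!0]" using w by (metis append_Cons append_Nil append_assoc)
  then show "overlap w" unfolding overlap_def by blast
qed

lemma OFchar: "overlap_free z \<longleftrightarrow> (\<forall>i p. \<not> ovs z i p)"
proof
  assume of: "overlap_free z"
  show "\<forall>i p. \<not> ovs z i p"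
  proof (intro allI notI)
    fix i p assume o: "ovs z i p"
    define w where "w = map (\<lambda>j. z (i+j)) [0..<2*p+1]"
    have "factor w z" unfolding factor_def w_def by (intro exI[of _ i]) (simp del: upt_Suc)
    moreover have "overlap w" unfolding overlap_iff
      using o unfolding ovs_def w_def by (auto simp: add.assoc simp del: upt_Suc)
    ultimately show False using of unfolding overlap_free_def by blast
  qed
next
  assume h: "\<forall>i p. \<not> ovs z i p"
  show "overlap_free z" unfolding overlap_free_def
  proof (intro allI impI notI)
    fix w assume "factor w z" "overlap w"
    then obtain i where i: "\<forall>j<length w. z (i + j) = w ! j" unfolding factor_def by blast
    obtain p where p: "p \<ge> 1" "length w = 2*p+1" "\<forall>j\<le>p. w!j = w!(j+p)"
      using \<open>overlap w\<close> unfolding overlap_iff by blast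
    have "ovs z i p" unfolding ovs_def
    proof (intro conjI allI impI)
      show "1 \<le> p" by fact
      fix k assume k: "k \<le> p"
      have "z (i+k) = w!k" using i k p by simp
      also have "\<dots> = w!(k+p)" using p k by simp
      also have "\<dots> = z (i+(k+p))" using i k p by simp
      finally show "z (i+k) = z (i+k+p)" by (simp add: add.assoc)
    qed
    then show False using h by blast
  qed
qed

lemma pre_char: "overlap_free (pre a y) \<longleftrightarrow> overlap_free y \<and> (\<forall>p. \<not> ovs (pre a y) 0 p)"
proof -
  have s: "ovs (pre a y) (Suc i) p \<longleftrightarrow> ovs y i p" for i p
    unfolding ovs_def by simp
  have "(\<forall>i p. \<not> ovs (pre a y) i p) \<longleftrightarrow> (\<forall>p. \<not> ovs (pre a y) 0 p) \<and> (\<forall>i p. \<not> ovs (pre a y) (Suc i) p)"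
    by (metis not0_implies_Suc)
  then show ?thesis unfolding OFchar s by blast
qed

lemma altl:
  assumes b: "blk z" and op: "odd p"
    and H: "\<forall>j. i \<le> j \<and> j < i+p \<and> odd j \<longrightarrow> z j = z (j+p) \<and> z (Suc j) = z (Suc j + p)"
  shows "z (i+p) = (\<not> z i)"
proof -
  have step: "z (Suc j) = (\<not> z j)" if "i \<le> j" "j < i+p" for j
  proof (cases "even j")
    case True then show ?thesis using b unfolding blk_def by blast
  next
    case False
    then have "even (j+p)" using op by simp
    then have "z (Suc (j+p)) = (\<not> z (j+p))" using b unfolding blk_def by blast
    then show ?thesis using H that False by auto
  qed
  have "\<forall>t\<le>p. z (i+t) = (if even t then z i else \<not> z i)"
  proof (intro allI)
    fix t show "t \<le> p \<longrightarrow> z (i+t) = (if even t then z i else \<not> z i)"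
    proof (induction t)
      case 0 then show ?case by simp
    next
      case (Suc t)
      show ?case
      proof
        assume "Suc t \<le> p"
        then have "z (Suc (i+t)) = (\<not> z (i+t))" using step by simp
        then show "z (i + Suc t) = (if even (Suc t) then z i else \<not> z i)"
          using Suc \<open>Suc t \<le> p\<close> by auto
      qed
    qed
  qed
  then show ?thesis using op by auto
qed

lemma oddov: assumes "blk z" "odd p" "ovs z i p" shows False
proof -
  have e: "\<forall>k\<le>p. z (i+k) = z (i+k+p)" using assms(3) unfolding ovs_def by blast
  have "\<forall>j. i \<le> j \<and> j < i+p \<and> odd j \<longrightarrow> z j = z (j+p) \<and> z (Suc j) = z (Suc j + p)"
  proof (intro allI impI)
    fix j assume j: "i \<le> j \<and> j < i+p \<and> odd j"
    then obtain d where d: "j = i + d" "d < p" by (metis add_less_cancel_left le_Suc_ex)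
    have "z (i + d) = z (i + d + p)" using e d by simp
    moreover have "z (i + Suc d) = z (i + Suc d + p)" using e[rule_format, of "Suc d"] d by simp
    ultimately show "z j = z (j+p) \<and> z (Suc j) = z (Suc j + p)" using d by simp
  qed
  then have "z (i+p) = (\<not> z i)" using altl assms by blast
  moreover have "z i = z (i+p)" using e[rule_format, of 0] by simp
  ultimately show False by simp
qed

lemma oddsq: assumes "blk z" "odd p" "even i" "\<forall>k<p. z (i+k) = z (i+k+p)" shows False
proof -
  have e: "\<forall>k<p. z (i+k) = z (i+k+p)" by fact
  have "\<forall>j. i \<le> j \<and> j < i+p \<and> odd j \<longrightarrow> z j = z (j+p) \<and> z (Suc j) = z (Suc j + p)"
  proof (intro allI impI)
    fix j assume j: "i \<le> j \<and> j < i+p \<and> odd j"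
    then obtain d where d: "j = i + d" "d < p" by (metis add_less_cancel_left le_Suc_ex)
    have "odd d" using j d assms(3) by simp
    have pp: "p = Suc (p-1)" using odd_pos[OF assms(2)] by simp
    have "d \<noteq> p - 1"
    proof
      assume "d = p - 1" then have "p = Suc d" using pp by simp
      then show False using \<open>odd d\<close> assms(2) by simp
    qed
    then have "Suc d < p" using d by linarith
    have "z (i + d) = z (i + d + p)" using e d by simp
    moreover have "z (i + Suc d) = z (i + Suc d + p)" using e \<open>Suc d < p\<close> by blast
    ultimately show "z j = z (j+p) \<and> z (Suc j) = z (Suc j + p)" using d by simp
  qed
  then have "z (i+p) = (\<not> z i)" using altl assms by blast
  moreover have "z i = z (i+p)" using e[rule_format, of 0] assms(2) by (simp add: odd_pos)
  ultimately show False by simp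
qed

lemma mu_gen: "mu x n = (if even n then x (n div 2) else \<not> x (n div 2))"
  by (simp add: mu_def)

lemma mu_vals: "mu x 0 = x 0" "mu x 1 = (\<not> x 0)" "mu x 2 = x 1" "mu x 3 = (\<not> x 1)"
  "mu x 4 = x 2" "mu x 5 = (\<not> x 2)" "mu x (Suc 0) = (\<not> x 0)"
  by (simp_all add: mu_def)

lemma K: assumes "ovs (mu x) i p" shows "\<exists>q. p = 2*q \<and> ovs x (i div 2) q"
proof -
  have "\<not> odd p" using oddov[OF blk_mu _ assms] by blast
  then obtain q where q: "p = 2*q" by blast
  have e: "\<forall>k\<le>p. mu x (i+k) = mu x (i+k+p)" and q1: "q \<ge> 1" using assms q unfolding ovs_def by auto
  have "ovs x (i div 2) q" unfolding ovs_def
  proof (intro conjI allI impI)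
    show "1 \<le> q" by fact
    fix t assume t: "t \<le> q"
    have h: "mu x (i+2*t) = mu x (i+2*t+2*q)" using e t q by simp
    have a: "(i + 2*t) div 2 = i div 2 + t" by simp
    have b: "(i + 2*t + 2*q) div 2 = i div 2 + t + q" by simp
    show "x (i div 2 + t) = x (i div 2 + t + q)"
      using h unfolding mu_gen a b by (simp split: if_splits)
  qed
  then show ?thesis using q by blast
qed

lemma K3: assumes "ovs x m q" shows "ovs (mu x) (2*m) (2*q)"
  unfolding ovs_def
proof (intro conjI allI impI)
  have e: "\<forall>t\<le>q. x (m+t) = x (m+t+q)" and "q \<ge> 1" using assms unfolding ovs_def by auto
  then show "1 \<le> 2*q" by simp
  fix k assume k: "k \<le> 2*q"
  show "mu x (2*m+k) = mu x (2*m+k+2*q)"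
  proof (cases "even k")
    case True then obtain t where t: "k = 2*t" by blast
    then have "t \<le> q" using k by simp
    then show ?thesis using e t by (simp add: mu_gen)
  next
    case False then obtain t where t: "k = 2*t+1" by (metis oddE)
    then have "t \<le> q" using k by simp
    then show ?thesis using e t by (simp add: mu_gen)
  qed
qed

lemma L1: "overlap_free (mu x) \<longleftrightarrow> overlap_free x"
  unfolding OFchar using K K3 by blast

lemma PRE0: "ovs (pre a y) 0 p \<longleftrightarrow> p \<ge> 1 \<and> a = y (p-1) \<and> (\<forall>k<p. y k = y (k+p))"
proof
  assume h: "ovs (pre a y) 0 p"
  then have p: "p \<ge> 1" and e: "\<forall>k\<le>p. pre a y k = pre a y (k+p)" unfolding ovs_def by auto
  have "a = y (p-1)" using e[rule_format, of 0] p by (simp add: pre_def)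
  moreover have "\<forall>k<p. y k = y (k+p)"
  proof (intro allI impI)
    fix k assume "k < p" then have "pre a y (Suc k) = pre a y (Suc k + p)" using e[rule_format, of "Suc k"] by simp
    then show "y k = y (k+p)" by simp
  qed
  ultimately show "p \<ge> 1 \<and> a = y (p-1) \<and> (\<forall>k<p. y k = y (k+p))" using p by blast
next
  assume h: "p \<ge> 1 \<and> a = y (p-1) \<and> (\<forall>k<p. y k = y (k+p))"
  show "ovs (pre a y) 0 p" unfolding ovs_def
  proof (intro conjI allI impI)
    show "1 \<le> p" using h by simp
    fix k assume k: "k \<le> p"
    show "pre a y (0+k) = pre a y (0+k+p)"
    proof (cases k)
      case 0 then show ?thesis using h by (simp add: pre_def)
    next
      case (Suc k') then have "k' < p" using k by simp
      then show ?thesis using h Suc by simp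
    qed
  qed
qed

lemma W1: assumes "ovs (pre a (mu x)) 0 p" shows "p \<ge> 1" "a = mu x (p-1)" "\<forall>k<p. mu x k = mu x (k+p)"
  using assms unfolding PRE0 by simp_all

lemma W2: assumes "\<forall>k<p. mu x k = mu x (k+p)" "p \<ge> 1" shows "even p"
proof (rule ccontr)
  assume "\<not> even p" then have op: "odd p" by simp
  have "\<forall>k<p. mu x (0+k) = mu x (0+k+p)" using assms by simp
  then show False using oddsq[OF blk_mu op, of 0] by simp
qed

lemma L3c1: assumes "ovs (pre a (mu x)) 0 p" shows "ovs (pre (\<not>a) x) 0 (p div 2)"
proof -
  have p1: "p \<ge> 1" and pa: "a = mu x (p-1)" and e: "\<forall>k<p. mu x k = mu x (k+p)"
    using W1[OF assms] by auto
  have "even p" using W2 e p1 by blast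
  then obtain q where q: "p = 2*q" by (rule evenE)
  have q1: "q \<ge> 1" using p1 q by simp
  have pq: "p - 1 = Suc (2*(q-1))" using q q1 by simp
  have xa: "x (q-1) = (\<not>a)" using pa unfolding pq by simp
  have sq: "\<forall>k<q. x k = x (k+q)"
  proof (intro allI impI)
    fix k assume "k < q"
    then have "2*k < p" using q by simp
    then have h1: "mu x (2*k) = mu x (2*k+p)" using e by blast
    have eq: "2*k+p = 2*(k+q)" using q by simp
    have "mu x (2*k) = mu x (2*(k+q))" using h1 unfolding eq .
    then show "x k = x (k+q)" unfolding mu_even .
  qed
  have "ovs (pre (\<not>a) x) 0 q" unfolding PRE0 using q1 xa sq by simp
  then show ?thesis using q by simp
qed

lemma L3c2: assumes "ovs (pre (\<not>a) x) 0 q" shows "ovs (pre a (mu x)) 0 (2*q)"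
proof -
  have q1: "q \<ge> 1" and xa: "(\<not>a) = x (q-1)" and e: "\<forall>k<q. x k = x (k+q)"
    using assms unfolding PRE0 by simp_all
  have pq: "2*q - 1 = Suc (2*(q-1))" using q1 by simp
  have ma: "a = mu x (2*q-1)" unfolding pq mu_odd using xa by (cases a) auto
  have sq: "\<forall>k<2*q. mu x k = mu x (k+2*q)"
  proof (intro allI impI)
    fix k assume k: "k < 2*q"
    then have "k div 2 < q" by simp
    then have "x (k div 2) = x (k div 2 + q)" using e by blast
    moreover have "(k + 2*q) div 2 = k div 2 + q" by simp
    moreover have "even (k + 2*q) = even k" by simp
    ultimately show "mu x k = mu x (k+2*q)" unfolding mu_gen by presburger
  qed
  show ?thesis unfolding PRE0 using q1 ma sq by simp
qed

lemma L3core: "(\<exists>p. ovs (pre a (mu x)) 0 p) \<longleftrightarrow> (\<exists>q. ovs (pre (\<not>a) x) 0 q)"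
  using L3c1 L3c2 by blast

lemma L3: "overlap_free (pre a (mu x)) \<longleftrightarrow> overlap_free (pre (\<not>a) x)"
  using pre_char[of a "mu x"] pre_char[of "\<not>a" x] L1[of x] L3core[of a x] by blast

lemma L4: "overlap_free (pre a (pre a (mu x))) \<longleftrightarrow>
   overlap_free (pre (\<not>a) x) \<and> x 0 = (\<not>a) \<and> x 1 = a \<and> x 2 = (\<not>a)"
proof
  assume h: "overlap_free (pre a (pre a (mu x)))"
  then have "overlap_free (pre a (mu x))" using pre_char by blast
  then have "overlap_free (pre (\<not>a) x)" using L3 by blast
  moreover have nov: "\<not> ovs (pre a (pre a (mu x))) i p" for i p using h unfolding OFchar by blast
  have x0: "x 0 = (\<not>a)"
  proof (rule ccontr)
    assume "x 0 \<noteq> (\<not>a)"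
    then have "ovs (pre a (pre a (mu x))) 0 1" unfolding ovs_def
      by (auto simp: le_Suc_eq mu_gen)
    then show False using nov by blast
  qed
  have x1: "x 1 = a"
  proof (rule ccontr)
    assume "x 1 \<noteq> a"
    have "ovs (pre a (pre a (mu x))) 1 2" unfolding ovs_def
    proof (intro conjI allI impI)
      fix k :: nat assume "k \<le> 2"
      then have "k = 0 \<or> k = 1 \<or> k = 2" by auto
      then show "pre a (pre a (mu x)) (1 + k) = pre a (pre a (mu x)) (1 + k + 2)"
        using x0 \<open>x 1 \<noteq> a\<close> by (auto simp: mu_gen pre_def)
    qed simp
    then show False using nov by blast
  qed
  have x2: "x 2 = (\<not>a)"
  proof (rule ccontr)
    assume "x 2 \<noteq> (\<not>a)"
    have "ovs (pre a (pre a (mu x))) 0 3" unfolding ovs_def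
    proof (intro conjI allI impI)
      fix k :: nat assume "k \<le> 3"
      then have "k = 0 \<or> k = 1 \<or> k = 2 \<or> k = 3" by auto
      then show "pre a (pre a (mu x)) (0 + k) = pre a (pre a (mu x)) (0 + k + 3)"
        using x0 x1 \<open>x 2 \<noteq> (\<not>a)\<close> by (elim disjE) (simp_all add: mu_vals pre_def)
    qed simp
    then show False using nov by blast
  qed
  ultimately show "overlap_free (pre (\<not>a) x) \<and> x 0 = (\<not>a) \<and> x 1 = a \<and> x 2 = (\<not>a)"
    using x0 x1 x2 by blast
next
  assume h: "overlap_free (pre (\<not>a) x) \<and> x 0 = (\<not>a) \<and> x 1 = a \<and> x 2 = (\<not>a)"
  then have of1: "overlap_free (pre a (mu x))" using L3 by blast
  have "\<not> ovs (pre a (pre a (mu x))) 0 p" for p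
  proof
    let ?y = "pre a (mu x)"
    assume "ovs (pre a ?y) 0 p"
    then have p: "p \<ge> 1" "a = ?y (p-1)" and e: "\<forall>k<p. ?y k = ?y (k+p)" unfolding PRE0 by auto
    show False
    proof (cases "p = 1")
      case True
      then have "?y 0 = ?y 1" using e[rule_format, of 0] by simp
      then show False using h by (simp add: mu_gen)
    next
      case False
      then have p2: "p \<ge> 2" using p by simp
      have "?y 0 = ?y p" using e p by (metis add_0 less_le_trans zero_less_one)
      then have z1: "mu x (p-1) = a" using p2 by (simp add: pre_def)
      have z0: "mu x (p-2) = a" using p(2) p2 by (simp add: pre_def numeral_2_eq_2)
      show False
      proof (cases "even p")
        case True
        have "even (p-2)" using True p2 by simp
        then have "mu x (Suc (p-2)) = (\<not> mu x (p-2))" using blk_mu unfolding blk_def by blast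
        moreover have "Suc (p-2) = p-1" using p2 by simp
        ultimately show False using z0 z1 by simp
      next
        case False
        show False
        proof (cases "p = 3")
          case True
          then have "?y 2 = ?y 5" using e[rule_format, of 2] by simp
          then show False using h by (simp add: mu_vals pre_def)
        next
          case False
          then have p5: "p \<ge> 5" using \<open>odd p\<close> p2 by presburger
          have "?y 2 = ?y (2+p)" "?y 3 = ?y (3+p)" using e[rule_format, of 2] e[rule_format, of 3] p5 by simp_all
          then have a1: "mu x 1 = mu x (1+p)" and a2: "mu x 2 = mu x (2+p)"
            by (simp_all add: pre_def)
          have "even (1+p)" using \<open>odd p\<close> by simp
          then have "mu x (Suc (1+p)) = (\<not> mu x (1+p))" using blk_mu unfolding blk_def by blast
          then have "mu x 2 = (\<not> mu x 1)" using a1 a2 by simp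
          then show False using h by (simp add: mu_vals)
        qed
      qed
    qed
  qed
  then show "overlap_free (pre a (pre a (mu x)))" using pre_char of1 by blast
qed

lemma MUPRE: "mu (pre a x) = pre a (pre (\<not>a) (mu x))"
proof
  fix n show "mu (pre a x) n = pre a (pre (\<not>a) (mu x)) n"
  proof (cases n)
    case 0 then show ?thesis by (simp add: mu_gen)
  next
    case (Suc m) then show ?thesis
    proof (cases m)
      case 0 then show ?thesis using Suc by (simp add: mu_gen)
    next
      case (Suc k) then show ?thesis using \<open>n = Suc m\<close> by (simp add: mu_gen pre_def)
    qed
  qed
qed

lemma begins1: "begins [b] x \<longleftrightarrow> x 0 = b" by (simp add: begins_def)
lemma begins2: "begins [b,c] x \<longleftrightarrow> x 0 = b \<and> x 1 = c"
  by (auto simp add: begins_def less_Suc_eq)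
lemma all3: "(\<forall>j<(3::nat). P j) \<longleftrightarrow> P 0 \<and> P 1 \<and> P 2"
  by (auto simp: numeral_3_eq_3 less_Suc_eq numeral_2_eq_2)
lemma begins3: "begins [b,c,d] x \<longleftrightarrow> x 0 = b \<and> x 1 = c \<and> x 2 = d"
proof -
  have "begins [b,c,d] x \<longleftrightarrow> (\<forall>j<(3::nat). x j = [b,c,d]!j)" unfolding begins_def by (simp add: numeral_3_eq_3)
  also have "\<dots> \<longleftrightarrow> x 0 = b \<and> x 1 = c \<and> x 2 = d" unfolding all3 by simp
  finally show ?thesis .
qed



lemma pre_1: "pre a y 1 = y 0" by (simp add: pre_def)
lemma pre_2: "pre a y 2 = y 1" by (simp add: pre_def)
lemma L3a: "overlap_free (pre L0 (mu x)) = overlap_free (pre L1 x)" using L3[of L0 x] by simp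
lemma L3b: "overlap_free (pre L1 (mu x)) = overlap_free (pre L0 x)" using L3[of L1 x] by simp
lemma L4a: "overlap_free (pre L0 (pre L0 (mu x))) = (overlap_free (pre L1 x) \<and> x 0 \<and> \<not> x 1 \<and> x 2)"
  using L4[of L0 x] by simp
lemma L4b: "overlap_free (pre L1 (pre L1 (mu x))) = (overlap_free (pre L0 x) \<and> \<not> x 0 \<and> x 1 \<and> \<not> x 2)"
  using L4[of L1 x] by simp
lemma M1: "pre L1 (pre L0 (mu x)) = mu (pre L1 x)" using MUPRE[of L1 x] by simp
lemma M0: "pre L0 (pre L1 (mu x)) = mu (pre L0 x)" using MUPRE[of L0 x] by simp


theorem lemma2:
  fixes x :: iword
  shows "(x \<in> SA \<longleftrightarrow> mu x \<in> SA)
   \<and> (x \<in> SB \<longleftrightarrow> pre L0 (mu x) \<in> SA)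
   \<and> (x \<in> SC \<longleftrightarrow> pre L0 (pre L0 (mu x)) \<in> SA)
   \<and> (x \<in> SD \<longleftrightarrow> pre L1 (mu x) \<in> SA)
   \<and> (x \<in> SE \<longleftrightarrow> pre L1 (pre L1 (mu x)) \<in> SA)
   \<and> (x \<in> SD \<longleftrightarrow> mu x \<in> SB)
   \<and> (x \<in> SB \<longleftrightarrow> pre L0 (mu x) \<in> SB)
   \<and> (x \<in> SE \<longleftrightarrow> pre L1 (mu x) \<in> SB)
   \<and> (x \<in> SB \<longleftrightarrow> mu x \<in> SD)
   \<and> (x \<in> SD \<longleftrightarrow> pre L1 (mu x) \<in> SD)
   \<and> (x \<in> SC \<longleftrightarrow> pre L0 (mu x) \<in> SD)
   \<and> (x \<in> SI \<longleftrightarrow> mu x \<in> SE)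
   \<and> (x \<in> SC \<longleftrightarrow> pre L0 (mu x) \<in> SE)
   \<and> (x \<in> SF \<longleftrightarrow> mu x \<in> SC)
   \<and> (x \<in> SE \<longleftrightarrow> pre L1 (mu x) \<in> SC)
   \<and> (x \<in> SJ \<longleftrightarrow> pre L0 (mu x) \<in> SI)
   \<and> (x \<in> SG \<longleftrightarrow> pre L1 (mu x) \<in> SF)
   \<and> (x \<in> SK \<longleftrightarrow> mu x \<in> SJ)
   \<and> (x \<in> SJ \<longleftrightarrow> mu x \<in> SK)
   \<and> (x \<in> SB \<longleftrightarrow> pre L0 (mu x) \<in> SJ)
   \<and> (x \<in> SC \<longleftrightarrow> pre L0 (mu x) \<in> SK)
   \<and> (x \<in> SH \<longleftrightarrow> mu x \<in> SG)
   \<and> (x \<in> SG \<longleftrightarrow> mu x \<in> SH)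
   \<and> (x \<in> SD \<longleftrightarrow> pre L1 (mu x) \<in> SG)
   \<and> (x \<in> SE \<longleftrightarrow> pre L1 (mu x) \<in> SH)"
    unfolding SA_def SB_def SC_def SD_def SE_def SF_def SG_def SH_def SI_def SJ_def SK_def
    OF_def mem_Collect_eq begins1 begins2 begins3 M1 M0 L1 L3a L3b L4a L4b
  by (auto simp add: mu_vals pre_1 pre_2)

end
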